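(* Let $X$ be a random variable with values in $\{0,1,2,\dots\}$ with finite variance and mean $\mu=\mathrm{E}[X]>0$, and let $k\ge 0$ be a fixed natural number. Let $X_1,\dots,X_n$ be i.i.d. copies of $X$, $\overline X_n=\frac{1}{n}\sum_{i=1}^n X_i$, $F_n(k)=\frac1n\sum_{i=1}^n I(X_i\le k)$, $f_k(m)=e^{-m}\left(1+m+\dots+\frac{m^k}{k!}\right)$, and $$V_n^{(k)}=\sqrt n\,\{f_k(\overline X_n)-F_n(k)\}.$$ If $X$ has the Poisson distribution with parameter $\mu$, then $V_n^{(k)}$ converges in distribution as $n\to\infty$ to $\mathcal N(0,\sigma^2_{\mu,k})$, where $$\sigma^2_{\mu,k}=\mathrm{Var}\Big[e^{-\mu}\frac{\mu^k}{k!}X+I(X\le k)\Big]=f_k(\mu)\{1-f_k(\mu)\}-\frac{e^{-2\mu}\mu^{2k+1}}{(k!)^2}.$$ Moreover, if $r_k=P(X\le k)-f_k(\mu)\neq 0$ (so in particular $X$ is not Poisson), then $|V_n^{(k)}|$ converges in probability to $\infty$.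
   Context: $I(\cdot)$ denotes the indicator function. Natural numbers include $0$. *)

theory Defs
  imports "HOL-Probability.Probability"
begin

definition f_poi :: "nat \<Rightarrow> real \<Rightarrow> real" where
  "f_poi k m = exp (- m) * (\<Sum>j\<le>k. m ^ j / fact j)"

text \<open>Sample mean of X_1..X_n (here indexed X 0 .. X (n-1)).\<close>
definition sample_mean :: "(nat \<Rightarrow> 'a \<Rightarrow> nat) \<Rightarrow> nat \<Rightarrow> 'a \<Rightarrow> real" where
  "sample_mean X n \<omega> = (\<Sum>i<n. real (X i \<omega>)) / real n"

definition emp_cdf :: "(nat \<Rightarrow> 'a \<Rightarrow> nat) \<Rightarrow> nat \<Rightarrow> nat \<Rightarrow> 'a \<Rightarrow> real" where
  "emp_cdf X n k \<omega> = (\<Sum>i<n. of_bool (X i \<omega> \<le> k)) / real n"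

definition V_stat :: "(nat \<Rightarrow> 'a \<Rightarrow> nat) \<Rightarrow> nat \<Rightarrow> nat \<Rightarrow> 'a \<Rightarrow> real" where
  "V_stat X k n \<omega> = sqrt (real n) * (f_poi k (sample_mean X n \<omega>) - emp_cdf X n k \<omega>)"

definition sigma2 :: "real \<Rightarrow> nat \<Rightarrow> real" where
  "sigma2 \<mu> k = f_poi k \<mu> * (1 - f_poi k \<mu>) - exp (- 2 * \<mu>) * \<mu> ^ (2 * k + 1) / (fact k)\<^sup>2"

end

theory Submission imports Defs begin


context prob_space begin

lemma cheb_mean:
  fixes Z :: "nat \<Rightarrow> 'a \<Rightarrow> real"
  assumes ind: "indep_vars (\<lambda>_. borel) Z UNIV"
  and sq: "\<And>i. integrable M (\<lambda>\<omega>. (Z i \<omega>)\<^sup>2)"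
  and ex: "\<And>i. expectation (Z i) = m"
  and va: "\<And>i. variance (Z i) = v"
  and n: "n > 0" and a: "a > 0"
  shows "prob {\<omega> \<in> space M. a \<le> \<bar>(\<Sum>i<n. Z i \<omega>) / real n - m\<bar>} \<le> v / (real n * a\<^sup>2)"
proof -
  have rv[measurable]: "\<And>i. Z i \<in> borel_measurable M" using ind by (auto simp: indep_vars_def)
  have int: "\<And>i. integrable M (Z i)" using square_integrable_imp_integrable[OF rv sq] .
  define W where "W i \<omega> = Z i \<omega> - m" for i \<omega>
  have rvW[measurable]: "\<And>i. W i \<in> borel_measurable M" unfolding W_def by measurable
  have indW: "indep_vars (\<lambda>_. borel) W UNIV" unfolding W_def
    by (rule indep_vars_compose2[OF ind]) auto
  have intW: "\<And>i. integrable M (W i)" unfolding W_def using int by auto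
  have EW: "\<And>i. expectation (W i) = 0" unfolding W_def using int ex by (simp add: prob_space)
  have sqW: "\<And>i. integrable M (\<lambda>\<omega>. W i \<omega> * W i \<omega>)"
  proof -
    fix i
    have "(\<lambda>\<omega>. W i \<omega> * W i \<omega>) = (\<lambda>\<omega>. (Z i \<omega>)\<^sup>2 - 2 * m * Z i \<omega> + m\<^sup>2)"
      by (auto simp: W_def power2_eq_square algebra_simps)
    then show "integrable M (\<lambda>\<omega>. W i \<omega> * W i \<omega>)" using sq int by auto
  qed
  have EW2: "\<And>i. expectation (\<lambda>\<omega>. W i \<omega> * W i \<omega>) = v"
    using va ex by (simp add: W_def power2_eq_square)
  have cross: "\<And>i j. i \<noteq> j \<Longrightarrow> expectation (\<lambda>\<omega>. W i \<omega> * W j \<omega>) = 0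
       \<and> integrable M (\<lambda>\<omega>. W i \<omega> * W j \<omega>)"
  proof -
    fix i j :: nat assume ij: "i \<noteq> j"
    have ind2: "indep_vars (\<lambda>_. borel) W {i, j}" by (rule indep_vars_subset[OF indW]) auto
    have "expectation (\<lambda>\<omega>. \<Prod>l\<in>{i,j}. W l \<omega>) = (\<Prod>l\<in>{i,j}. expectation (W l))"
      by (rule indep_vars_lebesgue_integral[OF _ ind2]) (auto simp: intW)
    moreover have "integrable M (\<lambda>\<omega>. \<Prod>l\<in>{i,j}. W l \<omega>)"
      by (rule indep_vars_integrable[OF _ ind2]) (auto simp: intW)
    ultimately show "expectation (\<lambda>\<omega>. W i \<omega> * W j \<omega>) = 0
       \<and> integrable M (\<lambda>\<omega>. W i \<omega> * W j \<omega>)" using ij EW by simp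
  qed
  have intWW: "\<And>i j. integrable M (\<lambda>\<omega>. W i \<omega> * W j \<omega>)"
    using cross sqW by (metis)
  define S where "S \<omega> = (\<Sum>i<n. W i \<omega>) / real n" for \<omega>
  have rvS[measurable]: "S \<in> borel_measurable M" unfolding S_def by measurable
  have S2: "(S \<omega>)\<^sup>2 = (\<Sum>i<n. \<Sum>j<n. W i \<omega> * W j \<omega>) / (real n)\<^sup>2" for \<omega>
    unfolding S_def by (simp add: power2_eq_square sum_product power_divide)
  have intS2: "integrable M (\<lambda>\<omega>. (S \<omega>)\<^sup>2)"
    unfolding S2 using intWW by auto
  have "expectation (\<lambda>\<omega>. (S \<omega>)\<^sup>2) = (\<Sum>i<n. \<Sum>j<n. expectation (\<lambda>\<omega>. W i \<omega> * W j \<omega>)) / (real n)\<^sup>2"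
    unfolding S2 using intWW by (simp add: Bochner_Integration.integral_sum)
  also have "\<dots> = (\<Sum>i<n. v) / (real n)\<^sup>2"
  proof -
    have "(\<Sum>j<n. expectation (\<lambda>\<omega>. W i \<omega> * W j \<omega>)) = v" if "i < n" for i
    proof -
      have "(\<Sum>j<n. expectation (\<lambda>\<omega>. W i \<omega> * W j \<omega>)) = (\<Sum>j\<in>{i}. expectation (\<lambda>\<omega>. W i \<omega> * W j \<omega>))"
        by (rule sum.mono_neutral_right) (use that cross in auto)
      then show ?thesis using EW2 by simp
    qed
    then show ?thesis by simp
  qed
  also have "\<dots> = v / real n" using n by (simp add: power2_eq_square)
  finally have ES2: "expectation (\<lambda>\<omega>. (S \<omega>)\<^sup>2) = v / real n" .
  have ES: "expectation S = 0" unfolding S_def using intW EW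
    by (simp add: Bochner_Integration.integral_sum)
  have "prob {\<omega> \<in> space M. \<bar>S \<omega> - expectation S\<bar> \<ge> a} \<le> variance S / a\<^sup>2"
    by (rule Chebyshev_inequality[OF rvS intS2 a])
  also have "variance S = v / real n" using ES ES2 by simp
  finally have "prob {\<omega> \<in> space M. \<bar>S \<omega>\<bar> \<ge> a} \<le> v / real n / a\<^sup>2" using ES by simp
  moreover have "(\<Sum>i<n. Z i \<omega>) / real n - m = S \<omega>" for \<omega>
    unfolding S_def W_def using n by (simp add: sum_subtractf field_simps)
  ultimately show ?thesis by simp
qed

lemma ident_integral:
  fixes g :: "nat \<Rightarrow> real"
  assumes rv: "\<And>i. X i \<in> measurable M (count_space UNIV)"
  and ident: "\<And>i. distr M (count_space UNIV) (X i) = distr M (count_space UNIV) (X 0)"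
  shows "expectation (\<lambda>\<omega>. g (X i \<omega>)) = expectation (\<lambda>\<omega>. g (X 0 \<omega>))"
    and "integrable M (\<lambda>\<omega>. g (X i \<omega>)) = integrable M (\<lambda>\<omega>. g (X 0 \<omega>))"
proof -
  have "expectation (\<lambda>\<omega>. g (X i \<omega>)) = integral\<^sup>L (distr M (count_space UNIV) (X i)) g"
    by (rule integral_distr[symmetric]) (use rv in auto)
  also have "\<dots> = integral\<^sup>L (distr M (count_space UNIV) (X 0)) g" by (simp only: ident[of i])
  also have "\<dots> = expectation (\<lambda>\<omega>. g (X 0 \<omega>))"
    by (rule integral_distr) (use rv in auto)
  finally show "expectation (\<lambda>\<omega>. g (X i \<omega>)) = expectation (\<lambda>\<omega>. g (X 0 \<omega>))" .
  have "integrable M (\<lambda>\<omega>. g (X i \<omega>)) = integrable (distr M (count_space UNIV) (X i)) g"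
    by (rule integrable_distr_eq[symmetric]) (use rv in auto)
  also have "\<dots> = integrable (distr M (count_space UNIV) (X 0)) g" by (simp only: ident[of i])
  also have "\<dots> = integrable M (\<lambda>\<omega>. g (X 0 \<omega>))"
    by (rule integrable_distr_eq) (use rv in auto)
  finally show "integrable M (\<lambda>\<omega>. g (X i \<omega>)) = integrable M (\<lambda>\<omega>. g (X 0 \<omega>))" .
qed

lemma lln_h:
  fixes h :: "nat \<Rightarrow> real"
  assumes rv: "\<And>i. X i \<in> measurable M (count_space UNIV)"
  and indep: "indep_vars (\<lambda>_. count_space UNIV) X UNIV"
  and ident: "\<And>i. distr M (count_space UNIV) (X i) = distr M (count_space UNIV) (X 0)"
  and sq: "integrable M (\<lambda>\<omega>. (h (X 0 \<omega>))\<^sup>2)"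
  and n: "n > 0" and a: "a > 0"
  shows "prob {\<omega> \<in> space M. a \<le> \<bar>(\<Sum>i<n. h (X i \<omega>)) / real n - expectation (\<lambda>\<omega>. h (X 0 \<omega>))\<bar>}
     \<le> variance (\<lambda>\<omega>. h (X 0 \<omega>)) / (real n * a\<^sup>2)"
proof (rule cheb_mean[OF _ _ _ _ n a])
  show "indep_vars (\<lambda>_. borel) (\<lambda>i \<omega>. h (X i \<omega>)) UNIV"
    by (rule indep_vars_compose2[OF indep]) simp
  show "integrable M (\<lambda>\<omega>. (h (X i \<omega>))\<^sup>2)" for i
    using ident_integral(2)[where X=X, OF rv ident, of "\<lambda>x. (h x)\<^sup>2" i] sq by simp
  show E: "expectation (\<lambda>\<omega>. h (X i \<omega>)) = expectation (\<lambda>\<omega>. h (X 0 \<omega>))" for i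
    by (rule ident_integral(1)[where X=X, OF rv ident])
  show "variance (\<lambda>\<omega>. h (X i \<omega>)) = variance (\<lambda>\<omega>. h (X 0 \<omega>))" for i
    unfolding E[of i]
    by (rule ident_integral(1)[where X=X, OF rv ident, of "\<lambda>x. (h x - expectation (\<lambda>\<omega>. h (X 0 \<omega>)))\<^sup>2"])
qed

end


lemma std_cont: "isCont (cdf std_normal_distribution) x"
proof -
  interpret S: real_distribution std_normal_distribution by (rule real_dist_normal_dist)
  have "emeasure std_normal_distribution {x} = 0"
    by (subst emeasure_density) (auto intro!: nn_integral_null_set AE_I'[of "{x}"] simp: emeasure_lborel_countable)
  then show ?thesis
    by (subst S.isCont_cdf) (simp add: measure_def)
qed

lemma normal_cdf_scale:
  assumes s: "\<sigma> > 0"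
  shows "cdf (density lborel (normal_density 0 \<sigma>)) x = cdf std_normal_distribution (x / \<sigma>)"
proof -
  interpret S: real_distribution std_normal_distribution by (rule real_dist_normal_dist)
  have d0: "distributed std_normal_distribution lborel (\<lambda>y. y) std_normal_density"
    unfolding distributed_def by (auto simp: distr_id2 measurable_ident_sets)
  have "distributed std_normal_distribution lborel (\<lambda>y. 0 + \<sigma> * y) (normal_density (0 + \<sigma> * 0) (\<bar>\<sigma>\<bar> * 1))"
    by (rule S.normal_density_affine[OF d0]) (use s in auto)
  then have "distr std_normal_distribution lborel (\<lambda>y. \<sigma> * y) = density lborel (normal_density 0 \<sigma>)"
    using s by (simp add: distributed_def)
  then have "cdf (density lborel (normal_density 0 \<sigma>)) x = measure (distr std_normal_distribution lborel (\<lambda>y. \<sigma> * y)) {..x}"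
    by (simp add: cdf_def2)
  also have "\<dots> = measure std_normal_distribution ((\<lambda>y. \<sigma> * y) -` {..x} \<inter> space std_normal_distribution)"
    by (rule measure_distr) auto
  also have "(\<lambda>y. \<sigma> * y) -` {..x} \<inter> space std_normal_distribution = {..x/\<sigma>}"
    using s by (auto simp: field_simps)
  finally show ?thesis by (simp add: cdf_def2)
qed

context prob_space begin

lemma slutsky:
  fixes T W :: "nat \<Rightarrow> 'a \<Rightarrow> real"
  assumes [measurable]: "\<And>n. T n \<in> borel_measurable M" "\<And>n. W n \<in> borel_measurable M"
  and conv: "weak_conv_m (\<lambda>n. distr M borel (T n)) std_normal_distribution"
  and W0: "\<And>\<epsilon>. \<epsilon> > 0 \<Longrightarrow> (\<lambda>n. prob {\<omega> \<in> space M. \<epsilon> \<le> \<bar>W n \<omega>\<bar>}) \<longlonglongrightarrow> 0"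
  and s: "\<sigma> > 0"
  shows "weak_conv_m (\<lambda>n. distr M borel (\<lambda>\<omega>. \<sigma> * T n \<omega> + W n \<omega>)) (density lborel (normal_density 0 \<sigma>))"
  unfolding weak_conv_m_def weak_conv_def
proof (intro allI impI)
  fix x :: real
  define \<Phi> where "\<Phi> = cdf std_normal_distribution"
  define F where "F n y = prob {\<omega> \<in> space M. T n \<omega> \<le> y}" for n y
  define G where "G n = prob {\<omega> \<in> space M. \<sigma> * T n \<omega> + W n \<omega> \<le> x}" for n
  define P where "P \<epsilon> n = prob {\<omega> \<in> space M. \<epsilon> \<le> \<bar>W n \<omega>\<bar>}" for \<epsilon> n
  have Fconv: "(\<lambda>n. F n y) \<longlonglongrightarrow> \<Phi> y" for y
  proof -
    have "(\<lambda>n. cdf (distr M borel (T n)) y) \<longlonglongrightarrow> cdf std_normal_distribution y"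
      using conv std_cont unfolding weak_conv_m_def weak_conv_def by blast
    moreover have "cdf (distr M borel (T n)) y = F n y" for n
      unfolding cdf_def2 F_def by (subst measure_distr) (auto intro!: arg_cong[where f=prob])
    ultimately show ?thesis by (simp add: \<Phi>_def)
  qed
  have Gdef: "cdf (distr M borel (\<lambda>\<omega>. \<sigma> * T n \<omega> + W n \<omega>)) x = G n" for n
    unfolding cdf_def2 G_def by (subst measure_distr) (auto intro!: arg_cong[where f=prob])
  have upper: "G n \<le> F n ((x + \<epsilon>) / \<sigma>) + P \<epsilon> n" for n \<epsilon>
  proof -
    have "G n \<le> prob ({\<omega> \<in> space M. T n \<omega> \<le> (x + \<epsilon>) / \<sigma>} \<union> {\<omega> \<in> space M. \<epsilon> \<le> \<bar>W n \<omega>\<bar>})"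
      unfolding G_def
    proof (rule finite_measure_mono)
      show "{\<omega> \<in> space M. \<sigma> * T n \<omega> + W n \<omega> \<le> x}
         \<subseteq> {\<omega> \<in> space M. T n \<omega> \<le> (x + \<epsilon>) / \<sigma>} \<union> {\<omega> \<in> space M. \<epsilon> \<le> \<bar>W n \<omega>\<bar>}"
        using s by (auto simp: field_simps)
    qed measurable
    also have "\<dots> \<le> F n ((x + \<epsilon>) / \<sigma>) + P \<epsilon> n"
      unfolding F_def P_def by (rule measure_Un_le) measurable
    finally show ?thesis .
  qed
  have lower: "F n ((x - \<epsilon>) / \<sigma>) - P \<epsilon> n \<le> G n" for n \<epsilon>
  proof -
    have "F n ((x - \<epsilon>) / \<sigma>) \<le> prob ({\<omega> \<in> space M. \<sigma> * T n \<omega> + W n \<omega> \<le> x} \<union> {\<omega> \<in> space M. \<epsilon> \<le> \<bar>W n \<omega>\<bar>})"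
      unfolding F_def
    proof (rule finite_measure_mono)
      show "{\<omega> \<in> space M. T n \<omega> \<le> (x - \<epsilon>) / \<sigma>}
         \<subseteq> {\<omega> \<in> space M. \<sigma> * T n \<omega> + W n \<omega> \<le> x} \<union> {\<omega> \<in> space M. \<epsilon> \<le> \<bar>W n \<omega>\<bar>}"
        using s by (auto simp: field_simps)
    qed measurable
    also have "\<dots> \<le> G n + P \<epsilon> n"
      unfolding G_def P_def by (rule measure_Un_le) measurable
    finally show ?thesis by simp
  qed
  have "G \<longlonglongrightarrow> \<Phi> (x / \<sigma>)"
  proof (rule tendstoI)
    fix e :: real assume e: "e > 0"
    have "isCont \<Phi> (x / \<sigma>)" unfolding \<Phi>_def by (rule std_cont)
    then obtain d where d: "d > 0" "\<And>y. \<bar>y - x / \<sigma>\<bar> < d \<Longrightarrow> \<bar>\<Phi> y - \<Phi> (x / \<sigma>)\<bar> < e / 3"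
      unfolding isCont_def LIM_eq using e
      by (metis abs_zero diff_self divide_pos_pos zero_less_numeral real_norm_def)
    define \<epsilon> where "\<epsilon> = \<sigma> * d / 2"
    have \<epsilon>: "\<epsilon> > 0" using s d by (simp add: \<epsilon>_def)
    have xp: "(x + \<epsilon>) / \<sigma> = x / \<sigma> + d / 2" and xm: "(x - \<epsilon>) / \<sigma> = x / \<sigma> - d / 2"
      using s by (auto simp: \<epsilon>_def field_simps)
    have c1: "\<bar>\<Phi> (x / \<sigma> + d / 2) - \<Phi> (x / \<sigma>)\<bar> < e / 3" using d by simp
    have c2: "\<bar>\<Phi> (x / \<sigma> - d / 2) - \<Phi> (x / \<sigma>)\<bar> < e / 3" using d by simp
    have e3: "e / 3 > 0" using e by simp
    have ev1: "eventually (\<lambda>n. dist (F n (x / \<sigma> + d / 2)) (\<Phi> (x / \<sigma> + d / 2)) < e / 3) sequentially"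
      using Fconv e3 by (rule tendstoD)
    have ev2: "eventually (\<lambda>n. dist (F n (x / \<sigma> - d / 2)) (\<Phi> (x / \<sigma> - d / 2)) < e / 3) sequentially"
      using Fconv e3 by (rule tendstoD)
    have ev3: "eventually (\<lambda>n. dist (P \<epsilon> n) 0 < e / 3) sequentially"
      using W0[OF \<epsilon>] e3 unfolding P_def by (rule tendstoD)
    show "eventually (\<lambda>n. dist (G n) (\<Phi> (x / \<sigma>)) < e) sequentially"
      using ev1 ev2 ev3
    proof eventually_elim
      case (elim n)
      have "G n \<le> F n (x / \<sigma> + d / 2) + P \<epsilon> n" using upper[of n \<epsilon>] xp by simp
      moreover have "F n (x / \<sigma> - d / 2) - P \<epsilon> n \<le> G n" using lower[of n \<epsilon>] xm by simp
      ultimately show ?case using elim c1 c2 unfolding dist_real_def abs_less_iff by linarith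
    qed
  qed
  then show "(\<lambda>n. cdf (distr M borel (\<lambda>\<omega>. \<sigma> * T n \<omega> + W n \<omega>)) x)
      \<longlonglongrightarrow> cdf (density lborel (normal_density 0 \<sigma>)) x"
    unfolding Gdef normal_cdf_scale[OF s] \<Phi>_def by simp
qed

end



lemma pois_S0:
  assumes m: "\<mu> > 0"
  shows "(\<lambda>x. pmf (poisson_pmf \<mu>) x) sums 1"
proof -
  have "(\<lambda>n. \<mu> ^ n /\<^sub>R fact n) sums exp \<mu>" by (rule exp_converges)
  then have "(\<lambda>n. \<mu> ^ n / fact n * exp (-\<mu>)) sums (exp \<mu> * exp (-\<mu>))"
    by (intro sums_mult2) (simp add: divide_inverse mult.commute)
  then show ?thesis using m by (simp add: exp_minus_inverse)
qed

lemma pois_shift: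
  assumes m: "\<mu> > 0"
  shows "pmf (poisson_pmf \<mu>) (Suc n) * (1 + real n) = \<mu> * pmf (poisson_pmf \<mu>) n"
proof -
  have "pmf (poisson_pmf \<mu>) (Suc n) = \<mu> * \<mu> ^ n / ((1 + real n) * fact n) * exp (-\<mu>)"
    using m by (simp add: fact_Suc)
  moreover have "(1 + real n) \<noteq> 0" by simp
  moreover have "fact n \<noteq> (0::real)" by simp
  ultimately have "pmf (poisson_pmf \<mu>) (Suc n) * (1 + real n) = \<mu> * (\<mu> ^ n / fact n) * exp (-\<mu>)"
    by (simp add: divide_simps)
  then show ?thesis using m by simp
qed

lemma pois_S1:
  assumes m: "\<mu> > 0"
  shows "(\<lambda>x. pmf (poisson_pmf \<mu>) x * real x) sums \<mu>"
proof -
  have "(\<lambda>n. \<mu> * pmf (poisson_pmf \<mu>) n) sums (\<mu> * 1)"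
    by (rule sums_mult[OF pois_S0[OF m]])
  then have "(\<lambda>n. pmf (poisson_pmf \<mu>) (Suc n) * real (Suc n)) sums \<mu>"
    by (simp add: pois_shift[OF m])
  then show ?thesis by (subst (asm) sums_Suc_iff) simp
qed

lemma pois_S2:
  assumes m: "\<mu> > 0"
  shows "(\<lambda>x. pmf (poisson_pmf \<mu>) x * (real x)\<^sup>2) sums (\<mu> * (\<mu> + 1))"
proof -
  have "(\<lambda>n. \<mu> * (pmf (poisson_pmf \<mu>) n * real n + pmf (poisson_pmf \<mu>) n)) sums (\<mu> * (\<mu> + 1))"
    by (rule sums_mult[OF sums_add[OF pois_S1[OF m] pois_S0[OF m]]])
  moreover have "pmf (poisson_pmf \<mu>) (Suc n) * (real (Suc n))\<^sup>2
      = \<mu> * (pmf (poisson_pmf \<mu>) n * real n + pmf (poisson_pmf \<mu>) n)" for n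
  proof -
    have "pmf (poisson_pmf \<mu>) (Suc n) * (real (Suc n))\<^sup>2
      = (pmf (poisson_pmf \<mu>) (Suc n) * real (Suc n)) * real (Suc n)"
      by (simp add: power2_eq_square)
    also have "\<dots> = \<mu> * pmf (poisson_pmf \<mu>) n * (real n + 1)" by (simp add: pois_shift[OF m])
    finally show ?thesis by (simp add: algebra_simps)
  qed
  ultimately have "(\<lambda>n. pmf (poisson_pmf \<mu>) (Suc n) * (real (Suc n))\<^sup>2) sums (\<mu> * (\<mu> + 1))"
    by simp
  then show ?thesis by (subst (asm) sums_Suc_iff) simp
qed

lemma pois_fsum:
  assumes m: "\<mu> > 0"
  shows "(\<Sum>x\<le>k. pmf (poisson_pmf \<mu>) x) = f_poi k \<mu>"
  using m by (simp add: f_poi_def sum_distrib_left sum_distrib_right mult.commute)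

lemma pois_xsum:
  assumes m: "\<mu> > 0"
  shows "(\<Sum>x\<le>k. pmf (poisson_pmf \<mu>) x * real x) = \<mu> * (f_poi k \<mu> - exp (-\<mu>) * \<mu> ^ k / fact k)"
proof (induction k)
  case 0
  then show ?case by (simp add: f_poi_def)
next
  case (Suc k)
  have "(\<Sum>x\<le>Suc k. pmf (poisson_pmf \<mu>) x * real x)
     = \<mu> * (f_poi k \<mu> - exp (-\<mu>) * \<mu> ^ k / fact k) + \<mu> * pmf (poisson_pmf \<mu>) k"
    using Suc by (simp add: pois_shift[OF m] del: pmf_poisson)
  also have "\<dots> = \<mu> * f_poi k \<mu>" using m by (simp add: algebra_simps)
  also have "f_poi k \<mu> = f_poi (Suc k) \<mu> - exp (-\<mu>) * \<mu> ^ Suc k / fact (Suc k)"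
    by (simp add: f_poi_def algebra_simps)
  finally show ?case .
qed

lemma pois_var:
  fixes \<mu> :: real and k :: nat
  assumes m: "\<mu> > 0"
  defines "a \<equiv> exp (-\<mu>) * \<mu> ^ k / fact k"
  defines "c \<equiv> a * \<mu> + f_poi k \<mu>"
  defines "y \<equiv> \<lambda>x::nat. a * real x + of_bool (x \<le> k)"
  shows "(\<lambda>x. pmf (poisson_pmf \<mu>) x * of_bool (x \<le> k)) sums f_poi k \<mu>"
    and "(\<lambda>x. pmf (poisson_pmf \<mu>) x * y x) sums c"
    and "(\<lambda>x. pmf (poisson_pmf \<mu>) x * (y x - c)\<^sup>2) sums sigma2 \<mu> k"
    and "sigma2 \<mu> k > 0"
proof -
  let ?p = "pmf (poisson_pmf \<mu>)"
  define f where "f = f_poi k \<mu>"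
  have IS: "(\<lambda>x. ?p x * of_bool (x \<le> k)) sums f"
  proof -
    have "(\<lambda>x. ?p x * of_bool (x \<le> k)) sums (\<Sum>x\<le>k. ?p x * of_bool (x \<le> k))"
      by (rule sums_finite) auto
    then show ?thesis using pois_fsum[OF m, of k] by (simp add: f_def)
  qed
  then show "(\<lambda>x. ?p x * of_bool (x \<le> k)) sums f_poi k \<mu>" by (simp add: f_def)
  have XIS: "(\<lambda>x. ?p x * real x * of_bool (x \<le> k)) sums (\<mu> * (f - a))"
  proof -
    have "(\<lambda>x. ?p x * real x * of_bool (x \<le> k)) sums (\<Sum>x\<le>k. ?p x * real x * of_bool (x \<le> k))"
      by (rule sums_finite) auto
    then show ?thesis using pois_xsum[OF m, of k] by (simp add: f_def a_def)
  qed
  have "(\<lambda>x. a * (?p x * real x) + ?p x * of_bool (x \<le> k)) sums (a * \<mu> + f)"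
    by (intro sums_add sums_mult pois_S1[OF m] IS)
  moreover have "(\<lambda>x. a * (?p x * real x) + ?p x * of_bool (x \<le> k)) = (\<lambda>x. ?p x * y x)"
    by (auto simp: y_def algebra_simps)
  ultimately show Y: "(\<lambda>x. ?p x * y x) sums c" by (simp add: c_def f_def)
  have comb: "(\<lambda>x. a\<^sup>2 * (?p x * (real x)\<^sup>2) + 2 * a * (?p x * real x * of_bool (x \<le> k))
      + ?p x * of_bool (x \<le> k) - 2 * c * a * (?p x * real x) - 2 * c * (?p x * of_bool (x \<le> k))
      + c\<^sup>2 * ?p x)
     sums (a\<^sup>2 * (\<mu> * (\<mu> + 1)) + 2 * a * (\<mu> * (f - a)) + f - 2 * c * a * \<mu> - 2 * c * f + c\<^sup>2 * 1)"
    by (rule sums_add[OF sums_diff[OF sums_diff[OF sums_add[OF sums_add[OF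
        sums_mult[OF pois_S2[OF m]] sums_mult[OF XIS]] IS] sums_mult[OF pois_S1[OF m]]] sums_mult[OF IS]]
        sums_mult[OF pois_S0[OF m]]])
  have feq: "(\<lambda>x. a\<^sup>2 * (?p x * (real x)\<^sup>2) + 2 * a * (?p x * real x * of_bool (x \<le> k))
      + ?p x * of_bool (x \<le> k) - 2 * c * a * (?p x * real x) - 2 * c * (?p x * of_bool (x \<le> k))
      + c\<^sup>2 * ?p x) = (\<lambda>x. ?p x * (y x - c)\<^sup>2)"
  proof
    fix x
    show "a\<^sup>2 * (?p x * (real x)\<^sup>2) + 2 * a * (?p x * real x * of_bool (x \<le> k))
      + ?p x * of_bool (x \<le> k) - 2 * c * a * (?p x * real x) - 2 * c * (?p x * of_bool (x \<le> k))
      + c\<^sup>2 * ?p x = ?p x * (y x - c)\<^sup>2"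
    proof (cases "x \<le> k")
      case True
      then show ?thesis unfolding y_def by (simp add: power2_eq_square) algebra
    next
      case False
      then show ?thesis unfolding y_def by (simp add: power2_eq_square) algebra
    qed
  qed
  have a2: "a\<^sup>2 * \<mu> = exp (- 2 * \<mu>) * \<mu> ^ (2 * k + 1) / (fact k)\<^sup>2"
  proof -
    have "exp (- 2 * \<mu>) = exp (-\<mu>) * exp (-\<mu>)" by (simp add: mult_exp_exp)
    moreover have "\<mu> ^ (2 * k + 1) = \<mu> ^ k * \<mu> ^ k * \<mu>" by (simp add: mult_2 power_add)
    ultimately show ?thesis by (simp add: a_def power2_eq_square) metis
  qed
  have val: "a\<^sup>2 * (\<mu> * (\<mu> + 1)) + 2 * a * (\<mu> * (f - a)) + f - 2 * c * a * \<mu> - 2 * c * f + c\<^sup>2 * 1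
     = f * (1 - f) - a\<^sup>2 * \<mu>"
    unfolding c_def f_def power2_eq_square by algebra
  have sig: "sigma2 \<mu> k = f * (1 - f) - a\<^sup>2 * \<mu>"
    unfolding sigma2_def a2 f_def ..
  show V: "(\<lambda>x. ?p x * (y x - c)\<^sup>2) sums sigma2 \<mu> k"
    using comb unfolding feq val sig .
  let ?g = "\<lambda>x. ?p x * (y x - c)\<^sup>2"
  have "sum ?g {0, 1} \<le> suminf ?g"
    by (rule sum_le_suminf) (use V in \<open>auto simp: sums_iff\<close>)
  also have "suminf ?g = sigma2 \<mu> k" using V by (simp add: sums_iff)
  finally have le: "?g 0 + ?g 1 \<le> sigma2 \<mu> k" by simp
  have apos: "a > 0" using m by (simp add: a_def)
  have y01: "y 0 \<noteq> y 1"
  proof (cases k)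
    case 0
    then have "a < 1" using m by (simp add: a_def)
    then show ?thesis using 0 by (simp add: y_def)
  next
    case (Suc j)
    then show ?thesis using apos by (simp add: y_def)
  qed
  have p0: "?p 0 > 0" and p1: "?p 1 > 0" using m by auto
  have "?g 0 + ?g 1 > 0"
  proof (rule ccontr)
    assume "\<not> ?g 0 + ?g 1 > 0"
    moreover have "?g 0 \<ge> 0" "?g 1 \<ge> 0" using p0 p1 by auto
    ultimately have "?g 0 = 0" "?g 1 = 0" by linarith+
    then have "y 0 = c" "y 1 = c" using p0 p1 by auto
    then show False using y01 by simp
  qed
  then show "sigma2 \<mu> k > 0" using le by linarith
qed

lemma pmf_nat_integral:
  fixes q :: "nat pmf" and h :: "nat \<Rightarrow> real"
  assumes nn: "\<And>x. 0 \<le> h x" and S: "(\<lambda>x. pmf q x * h x) sums s"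
  shows "integrable (measure_pmf q) h" and "measure_pmf.expectation q h = s"
proof -
  have I: "integrable (count_space UNIV) (\<lambda>x. pmf q x * h x)"
    unfolding integrable_count_space_nat_iff using S nn
    by (simp add: abs_mult sums_iff)
  show "integrable (measure_pmf q) h"
    unfolding measure_pmf_eq_density using I
    by (subst integrable_density) auto
  have "measure_pmf.expectation q h = integral\<^sup>L (count_space UNIV) (\<lambda>x. pmf q x * h x)"
    unfolding measure_pmf_eq_density by (subst integral_density) auto
  also have "\<dots> = s" using integral_count_space_nat[OF I] S by (simp add: sums_iff)
  finally show "measure_pmf.expectation q h = s" .
qed



lemma f_poi_deriv: "(f_poi k has_real_derivative (- (exp (-m) * m ^ k / fact k))) (at m)"
proof (induction k)
  case 0
  have "f_poi 0 = (\<lambda>m. exp (-m))" by (auto simp: f_poi_def)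
  moreover have "((\<lambda>m. exp (-m)) has_real_derivative (exp (-m) * (-1))) (at m)"
    by (auto intro!: derivative_eq_intros)
  ultimately show ?case by simp
next
  case (Suc k)
  have eq: "f_poi (Suc k) = (\<lambda>m. f_poi k m + exp (-m) * (m ^ Suc k / fact (Suc k)))"
    by (auto simp: f_poi_def algebra_simps)
  have d1: "((\<lambda>m. exp (-m)) has_real_derivative (exp (-m) * (-1))) (at m)"
    by (auto intro!: derivative_eq_intros)
  have d2: "((\<lambda>m. m ^ Suc k / fact (Suc k)) has_real_derivative (real (Suc k) * m ^ (Suc k - Suc 0) / fact (Suc k))) (at m)"
    by (rule DERIV_cdivide[OF DERIV_pow])
  note dd = DERIV_add[OF Suc DERIV_mult[OF d1 d2]]
  have r: "real (Suc k) * m ^ k / fact (Suc k) = m ^ k / fact k"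
    by (simp add: fact_Suc del: of_nat_Suc)
  show ?case unfolding eq
  proof (rule DERIV_cong[OF dd])
    show "- (exp (- m) * m ^ k / fact k) +
      (exp (- m) * - 1 * (m ^ Suc k / fact (Suc k)) + real (Suc k) * m ^ (Suc k - Suc 0) / fact (Suc k) * exp (- m))
      = - (exp (- m) * m ^ Suc k / fact (Suc k))"
      using r by (simp add: algebra_simps)
  qed
qed

lemma f_poi_cont: "isCont (f_poi k) m"
  using f_poi_deriv by (rule DERIV_isCont)

lemma f_poi_rem:
  assumes eta: "\<eta> > 0"
  shows "\<exists>\<delta>>0. \<forall>x. \<bar>x - m\<bar> < \<delta> \<longrightarrow>
     \<bar>f_poi k x - f_poi k m + exp (-m) * m ^ k / fact k * (x - m)\<bar> \<le> \<eta> * \<bar>x - m\<bar>"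
proof -
  let ?D = "- (exp (-m) * m ^ k / fact k)"
  have "((\<lambda>y. (f_poi k y - f_poi k m) / (y - m)) \<longlongrightarrow> ?D) (at m)"
    using f_poi_deriv[of k m] by (simp add: has_field_derivative_iff)
  then obtain \<delta> where d: "\<delta> > 0" and
    H: "\<And>y. y \<noteq> m \<Longrightarrow> norm (y - m) < \<delta> \<Longrightarrow> norm ((f_poi k y - f_poi k m) / (y - m) - ?D) < \<eta>"
    unfolding LIM_eq using eta by blast
  have "\<bar>f_poi k x - f_poi k m + exp (-m) * m ^ k / fact k * (x - m)\<bar> \<le> \<eta> * \<bar>x - m\<bar>"
    if "\<bar>x - m\<bar> < \<delta>" for x
  proof (cases "x = m")
    case True then show ?thesis by simp
  next
    case False
    then have "\<bar>(f_poi k x - f_poi k m) / (x - m) - ?D\<bar> < \<eta>" using H that by simp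
    moreover have "f_poi k x - f_poi k m + exp (-m) * m ^ k / fact k * (x - m)
       = ((f_poi k x - f_poi k m) / (x - m) - ?D) * (x - m)"
      using False by (simp add: field_simps)
    ultimately show ?thesis
      by (simp add: abs_mult mult_right_mono)
  qed
  then show ?thesis using d by blast
qed

lemma f_poi_meas[measurable]: "f_poi k \<in> borel_measurable borel"
  unfolding f_poi_def by measurable

lemma W_alg:
  fixes s n a \<mu> F f\<mu> SX SI :: real
  assumes s: "s > 0" and n: "n = s * s"
  shows "s * (F - SI / n) - (n * (a * \<mu> + f\<mu>) - a * SX - SI) / s
       = s * (F - f\<mu> + a * (SX / n - \<mu>))"
  using s unfolding n by (simp add: field_simps)

theorem proposition2:
  fixes M :: "'a measure" and X :: "nat \<Rightarrow> 'a \<Rightarrow> nat" and k :: nat and \<mu> :: real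
  assumes "prob_space M"
    and rv: "\<And>i. X i \<in> measurable M (count_space UNIV)"
    and indep: "prob_space.indep_vars M (\<lambda>_. count_space UNIV) X UNIV"
    and ident: "\<And>i. distr M (count_space UNIV) (X i) = distr M (count_space UNIV) (X 0)"
    and finvar: "integrable M (\<lambda>\<omega>. (real (X 0 \<omega>))\<^sup>2)"
    and mu_def: "\<mu> = prob_space.expectation M (\<lambda>\<omega>. real (X 0 \<omega>))"
    and mu_pos: "\<mu> > 0"
  shows
    "(distr M (count_space UNIV) (X 0) = measure_pmf (poisson_pmf \<mu>) \<longrightarrow>
        sigma2 \<mu> k = prob_space.variance M
            (\<lambda>\<omega>. exp (- \<mu>) * \<mu> ^ k / fact k * real (X 0 \<omega>) + of_bool (X 0 \<omega> \<le> k))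
      \<and> weak_conv_m (\<lambda>n. distr M borel (V_stat X k n))
            (density lborel (normal_density 0 (sqrt (sigma2 \<mu> k)))))
     \<and>
     (prob_space.prob M {\<omega> \<in> space M. X 0 \<omega> \<le> k} - f_poi k \<mu> \<noteq> 0 \<longrightarrow>
        (\<forall>C::real. (\<lambda>n. prob_space.prob M {\<omega> \<in> space M. \<bar>V_stat X k n \<omega>\<bar> \<le> C})
                       \<longlonglongrightarrow> 0))"
proof -
  interpret P: prob_space M by fact
  have rvX[measurable]: "\<And>i. X i \<in> measurable M (count_space UNIV)" by (rule rv)
  have mh[measurable]: "\<And>(h :: nat \<Rightarrow> real) i. (\<lambda>\<omega>. h (X i \<omega>)) \<in> borel_measurable M"
    by (rule measurable_compose[OF rv]) simp
  have mXbar[measurable]: "\<And>n. sample_mean X n \<in> borel_measurable M"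
    unfolding sample_mean_def[abs_def] by measurable
  have mFn[measurable]: "\<And>n. emp_cdf X n k \<in> borel_measurable M"
    unfolding emp_cdf_def[abs_def] by measurable
  have mV[measurable]: "\<And>n. V_stat X k n \<in> borel_measurable M"
    unfolding V_stat_def[abs_def] by measurable
  define q where "q = P.prob {\<omega> \<in> space M. X 0 \<omega> \<le> k}"
  define vX where "vX = P.variance (\<lambda>\<omega>. real (X 0 \<omega>))"
  define vI where "vI = P.variance (\<lambda>\<omega>. of_bool (X 0 \<omega> \<le> k) :: real)"
  have EI: "P.expectation (\<lambda>\<omega>. of_bool (X 0 \<omega> \<le> k) :: real) = q"
  proof -
    have "P.expectation (\<lambda>\<omega>. of_bool (X 0 \<omega> \<le> k) :: real)
        = P.expectation (indicator {\<omega> \<in> space M. X 0 \<omega> \<le> k})"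
      by (rule Bochner_Integration.integral_cong) (auto simp: indicator_def)
    also have "\<dots> = measure M ({\<omega> \<in> space M. X 0 \<omega> \<le> k} \<inter> space M)"
      by (rule Bochner_Integration.integral_indicator)
    also have "\<dots> = q" unfolding q_def by (rule arg_cong[where f="measure M"]) auto
    finally show ?thesis .
  qed
  have sqI: "integrable M (\<lambda>\<omega>. (of_bool (X 0 \<omega> \<le> k) :: real)\<^sup>2)"
  proof (rule P.integrable_const_bound[where B=1])
    show "AE \<omega> in M. norm ((of_bool (X 0 \<omega> \<le> k) :: real)\<^sup>2) \<le> 1" by (rule AE_I2) simp
    show "(\<lambda>\<omega>. (of_bool (X 0 \<omega> \<le> k) :: real)\<^sup>2) \<in> borel_measurable M" by measurable
  qed
  have LX: "\<And>n a. n > 0 \<Longrightarrow> a > 0 \<Longrightarrow>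
      P.prob {\<omega> \<in> space M. a \<le> \<bar>sample_mean X n \<omega> - \<mu>\<bar>} \<le> vX / (real n * a\<^sup>2)"
  proof -
    fix n :: nat and a :: real assume n: "n > 0" and a: "a > 0"
    have "P.prob {\<omega> \<in> space M. a \<le> \<bar>(\<Sum>i<n. real (X i \<omega>)) / real n - P.expectation (\<lambda>\<omega>. real (X 0 \<omega>))\<bar>}
       \<le> P.variance (\<lambda>\<omega>. real (X 0 \<omega>)) / (real n * a\<^sup>2)"
      by (rule P.lln_h[where h="\<lambda>x. real x" and X=X, OF rv indep ident finvar n a])
    then show "P.prob {\<omega> \<in> space M. a \<le> \<bar>sample_mean X n \<omega> - \<mu>\<bar>} \<le> vX / (real n * a\<^sup>2)"
      by (simp only: mu_def[symmetric] sample_mean_def vX_def)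
  qed
  have LI: "\<And>n a. n > 0 \<Longrightarrow> a > 0 \<Longrightarrow>
      P.prob {\<omega> \<in> space M. a \<le> \<bar>emp_cdf X n k \<omega> - q\<bar>} \<le> vI / (real n * a\<^sup>2)"
  proof -
    fix n :: nat and a :: real assume n: "n > 0" and a: "a > 0"
    have "P.prob {\<omega> \<in> space M. a \<le> \<bar>(\<Sum>i<n. of_bool (X i \<omega> \<le> k)) / real n - P.expectation (\<lambda>\<omega>. of_bool (X 0 \<omega> \<le> k) :: real)\<bar>}
       \<le> P.variance (\<lambda>\<omega>. of_bool (X 0 \<omega> \<le> k) :: real) / (real n * a\<^sup>2)"
      by (rule P.lln_h[where h="\<lambda>x. of_bool (x \<le> k)" and X=X, OF rv indep ident sqI n a])
    then show "P.prob {\<omega> \<in> space M. a \<le> \<bar>emp_cdf X n k \<omega> - q\<bar>} \<le> vI / (real n * a\<^sup>2)"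
      by (simp only: EI emp_cdf_def vI_def)
  qed
  have part2: "q - f_poi k \<mu> \<noteq> 0 \<longrightarrow>
     (\<forall>C::real. (\<lambda>n. P.prob {\<omega> \<in> space M. \<bar>V_stat X k n \<omega>\<bar> \<le> C}) \<longlonglongrightarrow> 0)"
  proof (intro impI allI)
    fix C :: real assume r: "q - f_poi k \<mu> \<noteq> 0"
    define d where "d = \<bar>q - f_poi k \<mu>\<bar>"
    have d: "d > 0" using r by (simp add: d_def)
    have d3: "d / 3 > 0" using d by simp
    have "\<forall>r>0. \<exists>s>0. \<forall>x. x \<noteq> \<mu> \<and> norm (x - \<mu>) < s \<longrightarrow> norm (f_poi k x - f_poi k \<mu>) < r"
      using f_poi_cont[where k=k and m=\<mu>] unfolding isCont_def LIM_eq .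
    from this[rule_format, OF d3] obtain \<delta> where \<delta>0: "\<delta> > 0" and
      H: "\<forall>x. x \<noteq> \<mu> \<and> norm (x - \<mu>) < \<delta> \<longrightarrow> norm (f_poi k x - f_poi k \<mu>) < d / 3" by blast
    have \<delta>: "\<And>x. \<bar>x - \<mu>\<bar> < \<delta> \<Longrightarrow> \<bar>f_poi k x - f_poi k \<mu>\<bar> < d / 3"
      using H d3 by (metis abs_zero diff_self real_norm_def)
    define K where "K = vX / \<delta>\<^sup>2 + vI / (d / 3)\<^sup>2"
    define N where "N = nat \<lceil>(3 * \<bar>C\<bar> / d)\<^sup>2\<rceil> + 1"
    have bound: "P.prob {\<omega> \<in> space M. \<bar>V_stat X k n \<omega>\<bar> \<le> C} \<le> K / real n" if n: "n \<ge> N" for n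
    proof -
      have n0: "n > 0" using n N_def by simp
      have sq: "sqrt (real n) * (d / 3) > \<bar>C\<bar>"
      proof -
        have "(3 * \<bar>C\<bar> / d)\<^sup>2 \<le> real (nat \<lceil>(3 * \<bar>C\<bar> / d)\<^sup>2\<rceil>)"
          by (rule real_nat_ceiling_ge)
        then have "(3 * \<bar>C\<bar> / d)\<^sup>2 < real n" using n N_def by linarith
        then have "3 * \<bar>C\<bar> / d < sqrt (real n)" by (rule real_less_rsqrt)
        then show ?thesis using d by (simp add: field_simps)
      qed
      have sub: "{\<omega> \<in> space M. \<bar>V_stat X k n \<omega>\<bar> \<le> C} \<subseteq>
         {\<omega> \<in> space M. \<delta> \<le> \<bar>sample_mean X n \<omega> - \<mu>\<bar>} \<union> {\<omega> \<in> space M. d / 3 \<le> \<bar>emp_cdf X n k \<omega> - q\<bar>}"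
      proof
        fix \<omega> assume \<omega>: "\<omega> \<in> {\<omega> \<in> space M. \<bar>V_stat X k n \<omega>\<bar> \<le> C}"
        show "\<omega> \<in> {\<omega> \<in> space M. \<delta> \<le> \<bar>sample_mean X n \<omega> - \<mu>\<bar>} \<union> {\<omega> \<in> space M. d / 3 \<le> \<bar>emp_cdf X n k \<omega> - q\<bar>}"
        proof (rule ccontr)
          assume "\<omega> \<notin> {\<omega> \<in> space M. \<delta> \<le> \<bar>sample_mean X n \<omega> - \<mu>\<bar>} \<union> {\<omega> \<in> space M. d / 3 \<le> \<bar>emp_cdf X n k \<omega> - q\<bar>}"
          then have a1: "\<bar>sample_mean X n \<omega> - \<mu>\<bar> < \<delta>" and a2: "\<bar>emp_cdf X n k \<omega> - q\<bar> < d / 3"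
            using \<omega> by auto
          have a3: "\<bar>f_poi k (sample_mean X n \<omega>) - f_poi k \<mu>\<bar> < d / 3" using \<delta>[OF a1] .
          have gap: "\<bar>f_poi k (sample_mean X n \<omega>) - emp_cdf X n k \<omega>\<bar> \<ge> d / 3"
            using a2 a3 d_def by linarith
          have "\<bar>V_stat X k n \<omega>\<bar> = sqrt (real n) * \<bar>f_poi k (sample_mean X n \<omega>) - emp_cdf X n k \<omega>\<bar>"
            by (simp add: V_stat_def abs_mult)
          also have "\<dots> \<ge> sqrt (real n) * (d / 3)"
            by (rule mult_left_mono[OF gap]) simp
          finally have "\<bar>V_stat X k n \<omega>\<bar> > C" using sq by linarith
          then show False using \<omega> by simp
        qed
      qed
      have "P.prob {\<omega> \<in> space M. \<bar>V_stat X k n \<omega>\<bar> \<le> C} \<le>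
         P.prob ({\<omega> \<in> space M. \<delta> \<le> \<bar>sample_mean X n \<omega> - \<mu>\<bar>} \<union> {\<omega> \<in> space M. d / 3 \<le> \<bar>emp_cdf X n k \<omega> - q\<bar>})"
        by (rule P.finite_measure_mono[OF sub]) measurable
      also have "\<dots> \<le> P.prob {\<omega> \<in> space M. \<delta> \<le> \<bar>sample_mean X n \<omega> - \<mu>\<bar>} + P.prob {\<omega> \<in> space M. d / 3 \<le> \<bar>emp_cdf X n k \<omega> - q\<bar>}"
        by (rule measure_Un_le) measurable
      also have "\<dots> \<le> vX / (real n * \<delta>\<^sup>2) + vI / (real n * (d / 3)\<^sup>2)"
        using LX[OF n0 \<delta>0] LI[OF n0 d3] by linarith
      also have "\<dots> = K / real n"
        by (simp only: divide_divide_eq_left' add_divide_distrib K_def)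
      finally show ?thesis .
    qed
    show "(\<lambda>n. P.prob {\<omega> \<in> space M. \<bar>V_stat X k n \<omega>\<bar> \<le> C}) \<longlonglongrightarrow> 0"
    proof (rule tendsto_sandwich[of "\<lambda>_. 0" _ _ "\<lambda>n. K / real n"])
      show "eventually (\<lambda>n. 0 \<le> P.prob {\<omega> \<in> space M. \<bar>V_stat X k n \<omega>\<bar> \<le> C}) sequentially" by simp
      show "eventually (\<lambda>n. P.prob {\<omega> \<in> space M. \<bar>V_stat X k n \<omega>\<bar> \<le> C} \<le> K / real n) sequentially"
        using bound by (auto simp: eventually_sequentially)
      show "(\<lambda>_. 0::real) \<longlonglongrightarrow> 0" by simp
      show "(\<lambda>n. K / real n) \<longlonglongrightarrow> 0" by (rule lim_const_over_n)
    qed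
  qed
  have part1: "distr M (count_space UNIV) (X 0) = measure_pmf (poisson_pmf \<mu>) \<longrightarrow>
        sigma2 \<mu> k = P.variance
            (\<lambda>\<omega>. exp (- \<mu>) * \<mu> ^ k / fact k * real (X 0 \<omega>) + of_bool (X 0 \<omega> \<le> k))
      \<and> weak_conv_m (\<lambda>n. distr M borel (V_stat X k n))
            (density lborel (normal_density 0 (sqrt (sigma2 \<mu> k))))"
  proof
    assume D: "distr M (count_space UNIV) (X 0) = measure_pmf (poisson_pmf \<mu>)"
    define a where "a = exp (-\<mu>) * \<mu> ^ k / fact k"
    define c where "c = a * \<mu> + f_poi k \<mu>"
    define y where "y = (\<lambda>x::nat. a * real x + of_bool (x \<le> k))"
    have apos: "a > 0" using mu_pos by (simp add: a_def)
    have ynn: "\<And>x. 0 \<le> y x" using apos by (simp add: y_def)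
    have PVy: "(\<lambda>x. pmf (poisson_pmf \<mu>) x * y x) sums c"
      using pois_var(2)[OF mu_pos, of k] unfolding a_def c_def y_def .
    have PVv: "(\<lambda>x. pmf (poisson_pmf \<mu>) x * (y x - c)\<^sup>2) sums sigma2 \<mu> k"
      using pois_var(3)[OF mu_pos, of k] unfolding a_def c_def y_def .
    have sig_pos: "sigma2 \<mu> k > 0" by (rule pois_var(4)[OF mu_pos])
    have EM: "P.expectation (\<lambda>\<omega>. g (X 0 \<omega>)) = measure_pmf.expectation (poisson_pmf \<mu>) g"
      for g :: "nat \<Rightarrow> real"
    proof -
      have "P.expectation (\<lambda>\<omega>. g (X 0 \<omega>)) = integral\<^sup>L (distr M (count_space UNIV) (X 0)) g"
        by (rule integral_distr[symmetric]) auto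
      then show ?thesis by (simp add: D)
    qed
    have IM: "integrable M (\<lambda>\<omega>. g (X 0 \<omega>)) = integrable (measure_pmf (poisson_pmf \<mu>)) g"
      for g :: "nat \<Rightarrow> real"
    proof -
      have "integrable M (\<lambda>\<omega>. g (X 0 \<omega>)) = integrable (distr M (count_space UNIV) (X 0)) g"
        by (rule integrable_distr_eq[symmetric]) auto
      then show ?thesis by (simp add: D)
    qed
    have Ey: "P.expectation (\<lambda>\<omega>. y (X 0 \<omega>)) = c"
      unfolding EM by (rule pmf_nat_integral(2)[OF ynn PVy])
    have int_y: "integrable M (\<lambda>\<omega>. y (X 0 \<omega>))"
      unfolding IM by (rule pmf_nat_integral(1)[OF ynn PVy])
    have Vy: "P.expectation (\<lambda>\<omega>. (y (X 0 \<omega>) - c)\<^sup>2) = sigma2 \<mu> k"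
      using EM[of "\<lambda>x. (y x - c)\<^sup>2"] pmf_nat_integral(2)[OF _ PVv] by simp
    have int_yc: "integrable M (\<lambda>\<omega>. (y (X 0 \<omega>) - c)\<^sup>2)"
      using IM[of "\<lambda>x. (y x - c)\<^sup>2"] pmf_nat_integral(1)[OF _ PVv] by simp
    have int_y2: "integrable M (\<lambda>\<omega>. (y (X 0 \<omega>))\<^sup>2)"
    proof -
      have "(\<lambda>\<omega>. (y (X 0 \<omega>))\<^sup>2) = (\<lambda>\<omega>. (y (X 0 \<omega>) - c)\<^sup>2 + 2 * c * y (X 0 \<omega>) - c\<^sup>2)"
        by (auto simp: power2_eq_square algebra_simps)
      then show ?thesis using int_yc int_y by simp
    qed
    have var_eq: "sigma2 \<mu> k = P.variance
            (\<lambda>\<omega>. exp (- \<mu>) * \<mu> ^ k / fact k * real (X 0 \<omega>) + of_bool (X 0 \<omega> \<le> k))"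
    proof -
      have "P.variance (\<lambda>\<omega>. y (X 0 \<omega>)) = sigma2 \<mu> k" using Ey Vy by simp
      then show ?thesis unfolding y_def a_def by simp
    qed
    define \<sigma> where "\<sigma> = sqrt (sigma2 \<mu> k)"
    have \<sigma>: "\<sigma> > 0" "\<sigma>\<^sup>2 = sigma2 \<mu> k" using sig_pos by (auto simp: \<sigma>_def)
    define Y where "Y i \<omega> = - y (X i \<omega>)" for i \<omega>
    have mY[measurable]: "\<And>i. Y i \<in> borel_measurable M" unfolding Y_def by measurable
    have indY: "P.indep_vars (\<lambda>_. borel) Y UNIV" unfolding Y_def
      by (rule P.indep_vars_compose2[OF indep]) simp
    have EY: "P.expectation (Y i) = - c" for i
    proof -
      have "P.expectation (Y i) = P.expectation (\<lambda>\<omega>. - y (X 0 \<omega>))"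
        unfolding Y_def by (rule P.ident_integral(1)[where X=X, OF rv ident, of "\<lambda>x. - y x"])
      then show ?thesis using Ey by simp
    qed
    have sqY: "integrable M (\<lambda>\<omega>. (Y i \<omega>)\<^sup>2)" for i
      using P.ident_integral(2)[where X=X, OF rv ident, of "\<lambda>x. (- y x)\<^sup>2" i] int_y2
      unfolding Y_def by simp
    have VY: "P.variance (Y i) = \<sigma>\<^sup>2" for i
    proof -
      have "P.variance (Y i) = P.expectation (\<lambda>\<omega>. (y (X i \<omega>) - c)\<^sup>2)"
        unfolding EY Y_def by (simp add: power2_commute)
      also have "\<dots> = P.expectation (\<lambda>\<omega>. (y (X 0 \<omega>) - c)\<^sup>2)"
        by (rule P.ident_integral(1)[where X=X, OF rv ident, of "\<lambda>x. (y x - c)\<^sup>2"])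
      finally show ?thesis using Vy \<sigma> by simp
    qed
    have dY: "distr M borel (Y n) = distr M borel (Y 0)" for n
    proof -
      have "distr M borel (Y j) = distr (distr M (count_space UNIV) (X j)) borel (\<lambda>x. - y x)" for j
        by (subst distr_distr) (auto simp: Y_def[abs_def] comp_def)
      then show ?thesis using ident[of n] by simp
    qed
    define T where "T n \<omega> = (\<Sum>i<n. Y i \<omega> - - c) / sqrt (real n * \<sigma>\<^sup>2)" for n \<omega>
    have mT[measurable]: "\<And>n. T n \<in> borel_measurable M" unfolding T_def by measurable
    have clt: "weak_conv_m (\<lambda>n. distr M borel (T n)) std_normal_distribution"
      using P.central_limit_theorem[OF indY EY \<sigma>(1) sqY VY dY] unfolding T_def by simp
    define W where "W n \<omega> = V_stat X k n \<omega> - \<sigma> * T n \<omega>" for n \<omega>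
    have mW[measurable]: "\<And>n. W n \<in> borel_measurable M" unfolding W_def by measurable
    have Wid: "W n \<omega> = sqrt (real n) * (f_poi k (sample_mean X n \<omega>) - f_poi k \<mu> + a * (sample_mean X n \<omega> - \<mu>))"
      for n \<omega>
    proof (cases "n = 0")
      case True
      then show ?thesis by (simp add: W_def V_stat_def T_def)
    next
      case False
      define s where "s = sqrt (real n)"
      have s: "s > 0" "real n = s * s" using False by (auto simp: s_def)
      define SX where "SX = (\<Sum>i<n. real (X i \<omega>))"
      define SI where "SI = (\<Sum>i<n. of_bool (X i \<omega> \<le> k) :: real)"
      have sumY: "(\<Sum>i<n. Y i \<omega> - - c) = real n * c - a * SX - SI"
        by (simp add: Y_def y_def SX_def SI_def sum.distrib sum_subtractf sum_distrib_left sum_negf)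
      have sq: "sqrt (real n * \<sigma>\<^sup>2) = s * \<sigma>"
        using \<sigma>(1) by (simp add: s_def real_sqrt_mult)
      have "\<sigma> * T n \<omega> = (real n * c - a * SX - SI) / s"
        using \<sigma>(1) s(1) unfolding T_def sumY sq by (simp add: field_simps)
      moreover have "V_stat X k n \<omega> = s * (f_poi k (SX / real n) - SI / real n)"
        by (simp add: V_stat_def s_def sample_mean_def emp_cdf_def SX_def SI_def)
      moreover have "sample_mean X n \<omega> = SX / real n" by (simp add: sample_mean_def SX_def)
      ultimately show ?thesis
        unfolding W_def s_def[symmetric] c_def
        using W_alg[OF s, of "f_poi k (SX / real n)" SI a \<mu> "f_poi k \<mu>" SX] by simp
    qed
    have W0: "(\<lambda>n. P.prob {\<omega> \<in> space M. \<epsilon> \<le> \<bar>W n \<omega>\<bar>}) \<longlonglongrightarrow> 0" if \<epsilon>: "\<epsilon> > 0" for \<epsilon>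
    proof (rule tendstoI)
      fix e :: real assume e: "e > 0"
      have vX0: "vX \<ge> 0" unfolding vX_def by (rule P.variance_positive)
      define \<eta> where "\<eta> = \<epsilon> * sqrt (e / (4 * (vX + 1)))"
      have \<eta>0: "\<eta> > 0" using \<epsilon> e vX0 by (simp add: \<eta>_def)
      have \<eta>2: "\<eta>\<^sup>2 = \<epsilon>\<^sup>2 * (e / (4 * (vX + 1)))"
        using e vX0 by (simp add: \<eta>_def power_mult_distrib)
      have \<eta>b: "vX * \<eta>\<^sup>2 / \<epsilon>\<^sup>2 < e / 2"
      proof -
        have "vX * \<eta>\<^sup>2 / \<epsilon>\<^sup>2 = vX * (\<epsilon>\<^sup>2 * (e / (4 * (vX + 1)))) / \<epsilon>\<^sup>2"
          unfolding \<eta>2 ..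
        also have "\<dots> = vX * (e / (4 * (vX + 1)))" using \<epsilon> by simp
        also have "\<dots> \<le> (vX + 1) * (e / (4 * (vX + 1)))"
          by (rule mult_right_mono) (use e vX0 in auto)
        also have "\<dots> = e / 4"
        proof -
          have "vX + 1 \<noteq> 0" "4 * vX + 4 \<noteq> 0" using vX0 by auto
          then show ?thesis by (simp add: field_simps)
        qed
        finally have "vX * \<eta>\<^sup>2 / \<epsilon>\<^sup>2 \<le> e / 4" .
        then show ?thesis using e by linarith
      qed
      obtain \<delta> where \<delta>0: "\<delta> > 0" and
        R: "\<And>x. \<bar>x - \<mu>\<bar> < \<delta> \<Longrightarrow> \<bar>f_poi k x - f_poi k \<mu> + a * (x - \<mu>)\<bar> \<le> \<eta> * \<bar>x - \<mu>\<bar>"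
        using f_poi_rem[OF \<eta>0, where m=\<mu> and k=k] unfolding a_def by blast
      have bnd: "P.prob {\<omega> \<in> space M. \<epsilon> \<le> \<bar>W n \<omega>\<bar>} \<le> vX / \<delta>\<^sup>2 / real n + vX * \<eta>\<^sup>2 / \<epsilon>\<^sup>2"
        if n0: "n > 0" for n
      proof -
        define s where "s = sqrt (real n)"
        have s: "s > 0" "s * s = real n" using n0 by (auto simp: s_def)
        have b2: "\<epsilon> / (\<eta> * s) > 0" using \<epsilon> \<eta>0 s by simp
        have sub: "{\<omega> \<in> space M. \<epsilon> \<le> \<bar>W n \<omega>\<bar>} \<subseteq>
           {\<omega> \<in> space M. \<delta> \<le> \<bar>sample_mean X n \<omega> - \<mu>\<bar>} \<union> {\<omega> \<in> space M. \<epsilon> / (\<eta> * s) \<le> \<bar>sample_mean X n \<omega> - \<mu>\<bar>}"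
        proof
          fix \<omega> assume \<omega>: "\<omega> \<in> {\<omega> \<in> space M. \<epsilon> \<le> \<bar>W n \<omega>\<bar>}"
          show "\<omega> \<in> {\<omega> \<in> space M. \<delta> \<le> \<bar>sample_mean X n \<omega> - \<mu>\<bar>} \<union> {\<omega> \<in> space M. \<epsilon> / (\<eta> * s) \<le> \<bar>sample_mean X n \<omega> - \<mu>\<bar>}"
          proof (rule ccontr)
            assume "\<omega> \<notin> {\<omega> \<in> space M. \<delta> \<le> \<bar>sample_mean X n \<omega> - \<mu>\<bar>} \<union> {\<omega> \<in> space M. \<epsilon> / (\<eta> * s) \<le> \<bar>sample_mean X n \<omega> - \<mu>\<bar>}"
            then have a1: "\<bar>sample_mean X n \<omega> - \<mu>\<bar> < \<delta>" and a2: "\<bar>sample_mean X n \<omega> - \<mu>\<bar> < \<epsilon> / (\<eta> * s)"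
              using \<omega> by auto
            have "\<bar>W n \<omega>\<bar> = s * \<bar>f_poi k (sample_mean X n \<omega>) - f_poi k \<mu> + a * (sample_mean X n \<omega> - \<mu>)\<bar>"
              unfolding Wid s_def by (simp add: abs_mult)
            also have "\<dots> \<le> s * (\<eta> * \<bar>sample_mean X n \<omega> - \<mu>\<bar>)"
              using R[OF a1] s by (simp add: mult_left_mono)
            also have "\<dots> < s * (\<eta> * (\<epsilon> / (\<eta> * s)))"
              by (intro mult_strict_left_mono) (use a2 s \<eta>0 in auto)
            also have "\<dots> = \<epsilon>" using s \<eta>0 by (simp add: field_simps)
            finally show False using \<omega> by simp
          qed
        qed
        have "P.prob {\<omega> \<in> space M. \<epsilon> \<le> \<bar>W n \<omega>\<bar>} \<le>
           P.prob ({\<omega> \<in> space M. \<delta> \<le> \<bar>sample_mean X n \<omega> - \<mu>\<bar>} \<union> {\<omega> \<in> space M. \<epsilon> / (\<eta> * s) \<le> \<bar>sample_mean X n \<omega> - \<mu>\<bar>})"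
          by (rule P.finite_measure_mono[OF sub]) measurable
        also have "\<dots> \<le> P.prob {\<omega> \<in> space M. \<delta> \<le> \<bar>sample_mean X n \<omega> - \<mu>\<bar>} + P.prob {\<omega> \<in> space M. \<epsilon> / (\<eta> * s) \<le> \<bar>sample_mean X n \<omega> - \<mu>\<bar>}"
          by (rule measure_Un_le) measurable
        also have "\<dots> \<le> vX / (real n * \<delta>\<^sup>2) + vX / (real n * (\<epsilon> / (\<eta> * s))\<^sup>2)"
          using LX[OF n0 \<delta>0] LX[OF n0 b2] by linarith
        also have "vX / (real n * (\<epsilon> / (\<eta> * s))\<^sup>2) = vX * \<eta>\<^sup>2 / \<epsilon>\<^sup>2"
          using s \<eta>0 \<epsilon> unfolding s(2)[symmetric] by (simp add: field_simps power2_eq_square)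
        also have "vX / (real n * \<delta>\<^sup>2) = vX / \<delta>\<^sup>2 / real n" by simp
        finally show ?thesis .
      qed
      have "(\<lambda>n. vX / \<delta>\<^sup>2 / real n) \<longlonglongrightarrow> 0" by (rule lim_const_over_n)
      then have ev1: "eventually (\<lambda>n. dist (vX / \<delta>\<^sup>2 / real n) 0 < e / 2) sequentially"
        using e by (intro tendstoD) auto
      have ev2: "eventually (\<lambda>n. n > (0::nat)) sequentially"
        by (rule eventually_gt_at_top)
      show "eventually (\<lambda>n. dist (P.prob {\<omega> \<in> space M. \<epsilon> \<le> \<bar>W n \<omega>\<bar>}) 0 < e) sequentially"
        using ev1 ev2
      proof eventually_elim
        case (elim n)
        have p0: "P.prob {\<omega> \<in> space M. \<epsilon> \<le> \<bar>W n \<omega>\<bar>} \<ge> 0" by simp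
        have A0: "\<bar>vX / \<delta>\<^sup>2 / real n\<bar> < e / 2" using elim(1) by (simp only: dist_real_def diff_zero)
        have A: "vX / \<delta>\<^sup>2 / real n < e / 2" using A0 abs_ge_self[of "vX / \<delta>\<^sup>2 / real n"] by linarith
        have "P.prob {\<omega> \<in> space M. \<epsilon> \<le> \<bar>W n \<omega>\<bar>} < e" using bnd[OF elim(2)] A \<eta>b by linarith
        then show ?case using p0 by (simp add: dist_real_def)
      qed
    qed
    have slut: "weak_conv_m (\<lambda>n. distr M borel (\<lambda>\<omega>. \<sigma> * T n \<omega> + W n \<omega>)) (density lborel (normal_density 0 \<sigma>))"
      by (rule P.slutsky[OF mT mW clt W0 \<sigma>(1)])
    moreover have "(\<lambda>\<omega>. \<sigma> * T n \<omega> + W n \<omega>) = V_stat X k n" for n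
      by (simp add: W_def fun_eq_iff)
    ultimately have "weak_conv_m (\<lambda>n. distr M borel (V_stat X k n)) (density lborel (normal_density 0 \<sigma>))"
      by simp
    then show "sigma2 \<mu> k = P.variance
            (\<lambda>\<omega>. exp (- \<mu>) * \<mu> ^ k / fact k * real (X 0 \<omega>) + of_bool (X 0 \<omega> \<le> k))
      \<and> weak_conv_m (\<lambda>n. distr M borel (V_stat X k n))
            (density lborel (normal_density 0 (sqrt (sigma2 \<mu> k))))"
      using var_eq by (simp add: \<sigma>_def)
  qed
  show ?thesis using part1 part2 unfolding q_def by (rule conjI)
qed

end
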